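(* In the setting described in the context, let $D\subseteq A\subseteq D\cup T$. Let $L\in\Pi_A$ with $\dim\operatorname{span}\langle L,L^*\rangle_A=2|L|-1$. Let $[e_1,e_2]\in T\setminus A$ with $e_1\in L$. Then $[e_1,e_2]\notin\operatorname{span}\langle L,L^*\rangle_A$ if and only if $e_2\notin L^*_A$.
   Context: Let $n\ge4$, $V=\{0,\dots,n-1\}$, and let $E=\{(u,v)\in V\times V:u\ne v\}$ be the set of arcs, written $uv$. Let $\chi_e\in\mathbb R^E$ be unit vectors and $\chi_F=\sum_{e\in F}\chi_e$. Let $\delta^\pm(w)$ be the arcs leaving/entering $w$, let $\delta^+(S)=\{uv:u\in S,v\notin S\}$, let $\mathcal S=\{S\subset V:2\le|S|\le n-2\}$, and let $x(F)=\sum_{e\in F}x_e$. The polytope is $P^n=\{x\in\mathbb R^E: x(\delta^+(w))=x(\delta^-(w))=1\ \forall w,\ x(\delta^+(S))\ge1\ \forall S\in\mathcal S,\ x\ge0\}$. Fix $\bar x\in P^n\cap\{0,\tfrac12\}^E$ and let $E_{\bar x}=\{e:\bar x_e=\tfrac12\}$. For $a\in\{0,1\}^E$ let $\mathrm{pr}(a)=\sum_{e\in E_{\bar x}}a_e\chi_e$. Let $\mathcal S_{\bar x}=\{S\in\mathcal S:\bar x(\delta^+(S))=1\}$. Define the sets $$D=\{\mathrm{pr}(\chi_{\delta^+(u)}),\mathrm{pr}(\chi_{\delta^-(u)}):u\in V\}, \qquad T=\{\mathrm{pr}(\chi_{\delta^+(S)}):S\in\mathcal S_{\bar x}\}.$$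 Every vector of $D\cup T$ equals $\chi_{e_1}+\chi_{e_2}$ for two distinct arcs $e_1,e_2\in E_{\bar x}$; it is written $[e_1,e_2]=[e_2,e_1]$. Let $A$ be a set with $D\subseteq A\subseteq D\cup T$. On $E_{\bar x}$ define the relation $e\sim_A e'$ iff there is $\bar e\in E_{\bar x}$ with $[e,\bar e]\in A$ and $[\bar e,e']\in A$. Let $\equiv_A$ be its transitive closure; this is an equivalence relation. The equivalence classes are called circuits, and they form the circuit partition $\Pi_A$ of $E_{\bar x}$. For $L\in\Pi_A$, the set $\{\bar e\in E_{\bar x}:\exists e\in L,\ [e,\bar e]\in A\}$ is nonempty and contained in a unique circuit, denoted $L^*_A$ and called the dual of $L$. The pair $\{L,L^*_A\}$ is a circuit pair. $L$ is called shorted if $L^*_A=L$. Define $\langle L,L^*\rangle_A=\{[e,\bar e]\in A: e\in L,\ \bar e\in L^*_A\}$. *)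

theory Defs
  imports Complex_Main "HOL-Library.Function_Algebras"
begin

type_synonym arc = "nat \<times> nat"
type_synonym vect = "arc \<Rightarrow> real"

definition verts :: "nat \<Rightarrow> nat set" where
  "verts n = {0..<n}"

definition arcs :: "nat \<Rightarrow> arc set" where
  "arcs n = {(u,v). u < n \<and> v < n \<and> u \<noteq> v}"

definition chi :: "arc \<Rightarrow> vect" where
  "chi e = (\<lambda>a. if a = e then 1 else 0)"

definition chiF :: "arc set \<Rightarrow> vect" where
  "chiF F = (\<lambda>a. \<Sum>e\<in>F. chi e a)"

definition out_arcs :: "nat \<Rightarrow> nat \<Rightarrow> arc set" where
  "out_arcs n w = {e \<in> arcs n. fst e = w}"

definition in_arcs :: "nat \<Rightarrow> nat \<Rightarrow> arc set" where
  "in_arcs n w = {e \<in> arcs n. snd e = w}"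

definition cut_out :: "nat \<Rightarrow> nat set \<Rightarrow> arc set" where
  "cut_out n S = {e \<in> arcs n. fst e \<in> S \<and> snd e \<notin> S}"

definition Sfam :: "nat \<Rightarrow> nat set set" where
  "Sfam n = {S. S \<subseteq> verts n \<and> 2 \<le> card S \<and> card S \<le> n - 2}"

definition xsum :: "vect \<Rightarrow> arc set \<Rightarrow> real" where
  "xsum x F = (\<Sum>e\<in>F. x e)"

definition polytope :: "nat \<Rightarrow> vect set" where
  "polytope n = {x. (\<forall>e. e \<notin> arcs n \<longrightarrow> x e = 0)
     \<and> (\<forall>w\<in>verts n. xsum x (out_arcs n w) = 1 \<and> xsum x (in_arcs n w) = 1)
     \<and> (\<forall>S\<in>Sfam n. xsum x (cut_out n S) \<ge> 1)
     \<and> (\<forall>e\<in>arcs n. x e \<ge> 0)}"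

definition half_integral :: "nat \<Rightarrow> vect \<Rightarrow> bool" where
  "half_integral n x \<longleftrightarrow> (\<forall>e\<in>arcs n. x e = 0 \<or> x e = 1/2)"

definition Ex :: "nat \<Rightarrow> vect \<Rightarrow> arc set" where
  "Ex n x = {e \<in> arcs n. x e = 1/2}"

definition pr :: "nat \<Rightarrow> vect \<Rightarrow> vect \<Rightarrow> vect" where
  "pr n x a = (\<lambda>e. if e \<in> Ex n x then a e else 0)"

definition Sx :: "nat \<Rightarrow> vect \<Rightarrow> nat set set" where
  "Sx n x = {S \<in> Sfam n. xsum x (cut_out n S) = 1}"

definition Dset :: "nat \<Rightarrow> vect \<Rightarrow> vect set" where
  "Dset n x = {pr n x (chiF (out_arcs n u)) | u. u \<in> verts n}
            \<union> {pr n x (chiF (in_arcs n u)) | u. u \<in> verts n}"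

definition Tset :: "nat \<Rightarrow> vect \<Rightarrow> vect set" where
  "Tset n x = {pr n x (chiF (cut_out n S)) | S. S \<in> Sx n x}"

definition br :: "arc \<Rightarrow> arc \<Rightarrow> vect" where
  "br e1 e2 = chi e1 + chi e2"

definition sim_rel :: "nat \<Rightarrow> vect \<Rightarrow> vect set \<Rightarrow> arc rel" where
  "sim_rel n x A = {(e, e'). e \<in> Ex n x \<and> e' \<in> Ex n x \<and>
      (\<exists>eb\<in>Ex n x. br e eb \<in> A \<and> br eb e' \<in> A)}"

definition equiv_rel :: "nat \<Rightarrow> vect \<Rightarrow> vect set \<Rightarrow> arc rel" where
  "equiv_rel n x A = (sim_rel n x A)\<^sup>+"

definition circuits :: "nat \<Rightarrow> vect \<Rightarrow> vect set \<Rightarrow> arc set set" where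
  "circuits n x A = Ex n x // equiv_rel n x A"

definition nbrs :: "nat \<Rightarrow> vect \<Rightarrow> vect set \<Rightarrow> arc set \<Rightarrow> arc set" where
  "nbrs n x A L = {eb \<in> Ex n x. \<exists>e\<in>L. br e eb \<in> A}"

definition dual :: "nat \<Rightarrow> vect \<Rightarrow> vect set \<Rightarrow> arc set \<Rightarrow> arc set" where
  "dual n x A L = (THE M. M \<in> circuits n x A \<and> nbrs n x A L \<subseteq> M)"

definition pairs :: "nat \<Rightarrow> vect \<Rightarrow> vect set \<Rightarrow> arc set \<Rightarrow> vect set" where
  "pairs n x A L = {v \<in> A. \<exists>e\<in>L. \<exists>eb\<in>dual n x A L. v = br e eb}"

definition fscale :: "real \<Rightarrow> vect \<Rightarrow> vect" where
  "fscale c f = (\<lambda>a. c * f a)"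

abbreviation fspan :: "vect set \<Rightarrow> vect set" where
  "fspan \<equiv> module.span fscale"

abbreviation fdim :: "vect set \<Rightarrow> nat" where
  "fdim \<equiv> vector_space.dim fscale"

lemma vector_space_fscale: "vector_space fscale"
  by unfold_locales (auto simp: fscale_def algebra_simps plus_fun_def)

end

theory Submission
  imports Defs
begin


lemma br_comm: "br a b = br b a"
  by (simp add: br_def add.commute)

lemma br_apply: "br a b x = (if x = a then 1 else 0) + (if x = b then 1 else 0)"
  by (simp add: br_def chi_def)

lemma chiF_apply: "finite F \<Longrightarrow> chiF F a = (if a \<in> F then 1 else 0)"
  by (simp add: chiF_def chi_def)

lemma finite_arcs: "finite (arcs n)"
proof -
  have "arcs n \<subseteq> {0..<n} \<times> {0..<n}" by (auto simp: arcs_def)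
  thus ?thesis by (rule finite_subset) auto
qed

lemma finite_Ex: "finite (Ex n x)"
  using finite_arcs by (rule finite_subset[rotated]) (auto simp: Ex_def)

lemma K:
  assumes "(a,b) \<in> (sim_rel n x A)\<^sup>+" "c \<in> Ex n x" "d \<in> Ex n x" "br c a \<in> A" "br b d \<in> A"
  shows "(c,d) \<in> (sim_rel n x A)\<^sup>+"
  using assms
proof (induction arbitrary: d rule: trancl_induct)
  case (base b)
  then obtain f where f: "f \<in> Ex n x" "br a f \<in> A" "br f b \<in> A" "a \<in> Ex n x" "b \<in> Ex n x"
    by (auto simp: sim_rel_def)
  have "(c,f) \<in> sim_rel n x A" using f base by (auto simp: sim_rel_def)
  moreover have "(f,d) \<in> sim_rel n x A" using f base by (auto simp: sim_rel_def)
  ultimately show ?case by auto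
next
  case (step b b')
  then obtain f where f: "f \<in> Ex n x" "br b f \<in> A" "br f b' \<in> A" "b' \<in> Ex n x"
    by (auto simp: sim_rel_def)
  have "(c,f) \<in> (sim_rel n x A)\<^sup>+" using step f by auto
  moreover have "(f,d) \<in> sim_rel n x A" using f step by (auto simp: sim_rel_def)
  ultimately show ?case by auto
qed

lemma card_H:
  assumes P: "xb \<in> polytope n" and hi: "half_integral n xb" and e: "e \<in> Ex n xb"
  shows "card {f \<in> Ex n xb. fst f = fst e} = 2"
proof -
  let ?u = "fst e"
  have u: "?u \<in> verts n" using e by (auto simp: Ex_def arcs_def verts_def)
  have s: "xsum xb (out_arcs n ?u) = 1" using P u by (auto simp: polytope_def)
  have fo: "finite (out_arcs n ?u)" using finite_arcs
    by (rule finite_subset[rotated]) (auto simp: out_arcs_def)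
  have sub: "{f \<in> Ex n xb. fst f = ?u} \<subseteq> out_arcs n ?u" by (auto simp: Ex_def out_arcs_def)
  have "xsum xb (out_arcs n ?u) = (\<Sum>f\<in>{f \<in> Ex n xb. fst f = ?u}. xb f)"
    unfolding xsum_def
    by (rule sum.mono_neutral_right[OF fo sub])
      (use hi in \<open>auto simp: half_integral_def Ex_def out_arcs_def\<close>)
  also have "\<dots> = (\<Sum>f\<in>{f \<in> Ex n xb. fst f = ?u}. 1/2)"
    by (rule sum.cong) (auto simp: Ex_def)
  also have "\<dots> = real (card {f \<in> Ex n xb. fst f = ?u}) / 2" by simp
  finally show ?thesis using s by simp
qed

lemma om_ex:
  assumes P: "xb \<in> polytope n" and hi: "half_integral n xb" and D: "Dset n xb \<subseteq> A"
    and e: "e \<in> Ex n xb"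
  shows "\<exists>f. f \<in> Ex n xb \<and> f \<noteq> e \<and> fst f = fst e \<and> br e f \<in> A"
proof -
  let ?H = "{f \<in> Ex n xb. fst f = fst e}"
  have c: "card ?H = 2" using card_H[OF P hi e] .
  have eH: "e \<in> ?H" using e by auto
  have "card (?H - {e}) = 1" using c eH by (simp add: card_Diff_singleton)
  then obtain f where f: "?H - {e} = {f}" by (auto simp: card_1_singleton_iff)
  have Hf: "?H = {e, f}" and fe: "f \<noteq> e" using f eH by auto
  have fE: "f \<in> Ex n xb" "fst f = fst e" using Hf by auto
  let ?u = "fst e"
  have u: "?u \<in> verts n" using e by (auto simp: Ex_def arcs_def verts_def)
  have fo: "finite (out_arcs n ?u)" using finite_arcs
    by (rule finite_subset[rotated]) (auto simp: out_arcs_def)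
  have "pr n xb (chiF (out_arcs n ?u)) \<in> Dset n xb" using u by (auto simp: Dset_def)
  moreover have "pr n xb (chiF (out_arcs n ?u)) = br e f"
  proof
    fix a
    have "pr n xb (chiF (out_arcs n ?u)) a = (if a \<in> ?H then 1 else 0)"
      using fo by (auto simp: pr_def chiF_apply Ex_def out_arcs_def)
    also have "\<dots> = br e f a" using Hf fe by (simp add: br_apply)
    finally show "pr n xb (chiF (out_arcs n ?u)) a = br e f a" .
  qed
  ultimately have "br e f \<in> A" using D by auto
  thus ?thesis using fE fe by blast
qed

lemma om_uniq:
  assumes P: "xb \<in> polytope n" and hi: "half_integral n xb"
    and e: "e \<in> Ex n xb" and f: "f \<in> Ex n xb" and g: "g \<in> Ex n xb"
    and "f \<noteq> e" "g \<noteq> e" "fst f = fst e" "fst g = fst e"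
  shows "f = g"
proof (rule ccontr)
  assume fg: "f \<noteq> g"
  let ?H = "{f \<in> Ex n xb. fst f = fst e}"
  have fin: "finite ?H" using finite_Ex by auto
  have "{e,f,g} \<subseteq> ?H" using assms by auto
  hence "card {e,f,g} \<le> card ?H" using fin by (rule card_mono[rotated])
  thus False using card_H[OF P hi e] fg assms by auto
qed

interpretation V: vector_space fscale by (rule vector_space_fscale)

lemma sub_zero: "V.subspace {x. x c = 0}"
  unfolding V.subspace_def by (auto simp: fscale_def)

lemma sub_sum: "V.subspace {x. sum x S = sum x T}"
  unfolding V.subspace_def by (auto simp: fscale_def sum.distrib sum_distrib_left[symmetric])

lemma dim_insert_gen:
  assumes "finite S" "x \<notin> V.span S"
  shows "V.dim (insert x S) = Suc (V.dim S)"
proof -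
  obtain B where B: "B \<subseteq> S" "V.independent B" "S \<subseteq> V.span B" "card B = V.dim S"
    by (rule V.basis_exists)
  have fB: "finite B" using B(1) assms(1) by (rule finite_subset)
  have sB: "V.span B = V.span S"
  proof
    show "V.span B \<subseteq> V.span S" using B(1) by (rule V.span_mono)
    show "V.span S \<subseteq> V.span B" using B(3) V.subspace_span by (rule V.span_minimal)
  qed
  have xB: "x \<notin> V.span B" using sB assms by simp
  have iB: "V.independent (insert x B)" using V.independent_insertI[OF xB B(2)] .
  have "V.span (insert x B) = V.span (insert x S)"
  proof (rule subset_antisym)
    have "insert x B \<subseteq> V.span (insert x S)"
      using B(1) V.span_superset[of "insert x S"] by blast
    thus "V.span (insert x B) \<subseteq> V.span (insert x S)" using V.subspace_span by (rule V.span_minimal)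
    have "S \<subseteq> V.span (insert x B)"
      using B(3) V.span_mono[of B "insert x B"] by blast
    hence "insert x S \<subseteq> V.span (insert x B)"
      using V.span_superset[of "insert x B"] by blast
    thus "V.span (insert x S) \<subseteq> V.span (insert x B)" using V.subspace_span by (rule V.span_minimal)
  qed
  hence "V.dim (insert x S) = card (insert x B)"
    using V.dim_eq_card[OF _ iB] by simp
  also have "\<dots> = Suc (card B)"
  proof -
    have "x \<notin> B" using xB V.span_superset[of B] by blast
    thus ?thesis using fB by simp
  qed
  finally show ?thesis using B(4) by simp
qed



theorem mainTheorem7:
  fixes n :: nat and xb :: vect and A :: "vect set" and L :: "arc set" and e1 e2 :: arc
  assumes "n \<ge> 4"
    and "xb \<in> polytope n"
    and "half_integral n xb"
    and "Dset n xb \<subseteq> A" and "A \<subseteq> Dset n xb \<union> Tset n xb"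
    and "L \<in> circuits n xb A"
    and "fdim (fspan (pairs n xb A L)) = 2 * card L - 1"
    and "br e1 e2 \<in> Tset n xb - A"
    and "e1 \<in> L"
  shows "br e1 e2 \<notin> fspan (pairs n xb A L) \<longleftrightarrow> e2 \<notin> dual n xb A L"
proof -
  note P = assms(2) and hi = assms(3) and DA = assms(4)
  define E where "E = Ex n xb"
  define R where "R = equiv_rel n xb A"
  define om where "om e = (SOME f. f \<in> E \<and> f \<noteq> e \<and> fst f = fst e \<and> br e f \<in> A)" for e
  have omP: "om e \<in> E \<and> om e \<noteq> e \<and> fst (om e) = fst e \<and> br e (om e) \<in> A" if "e \<in> E" for e
    unfolding om_def using someI_ex[OF om_ex[OF P hi DA that[unfolded E_def]]] E_def by simp
  have finE: "finite E" using finite_Ex E_def by simp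
  have simE: "sim_rel n xb A \<subseteq> E \<times> E" by (auto simp: sim_rel_def E_def)
  have RE: "R \<subseteq> E \<times> E" unfolding R_def equiv_rel_def using simE
    by (metis trancl_subset_Sigma)
  have symS: "sym (sim_rel n xb A)"
    by (auto simp: sym_def sim_rel_def br_comm)
  have symR: "(b,a) \<in> R" if "(a,b) \<in> R" for a b
    using that sym_trancl[OF symS] unfolding R_def equiv_rel_def by (meson symD)
  have transR: "(a,c) \<in> R" if "(a,b) \<in> R" "(b,c) \<in> R" for a b c
    using that unfolding R_def equiv_rel_def by (meson trancl_trans)
  have KR: "(c,d) \<in> R" if "(a,b) \<in> R" "c \<in> E" "d \<in> E" "br c a \<in> A" "br b d \<in> A" for a b c d
    using K that unfolding R_def equiv_rel_def E_def by blast
  have reflR: "(a,a) \<in> R" if "a \<in> E" for a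
  proof -
    have "(a,a) \<in> sim_rel n xb A" using omP[OF that] that
      unfolding sim_rel_def E_def by (auto simp: br_comm)
    thus ?thesis unfolding R_def equiv_rel_def by auto
  qed
  obtain a where aE: "a \<in> E" and La: "L = R``{a}"
    using assms(6) unfolding circuits_def E_def R_def by (auto elim: quotientE)
  have Lc: "x \<in> L \<longleftrightarrow> (e1,x) \<in> R" for x
  proof -
    have ae1: "(a,e1) \<in> R" using assms(9) La by auto
    show ?thesis using La ae1 symR transR by blast
  qed
  have LE: "L \<subseteq> E" using Lc RE by auto
  have e1E: "e1 \<in> E" using LE assms(9) by auto
  define b0 where "b0 = om e1"
  have b0: "b0 \<in> E" "b0 \<noteq> e1" "br e1 b0 \<in> A" using omP[OF e1E] b0_def by auto
  define Ls where "Ls = R``{b0}"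
  have Lsc: "x \<in> Ls \<longleftrightarrow> (b0,x) \<in> R" for x unfolding Ls_def by auto
  have LsE: "Ls \<subseteq> E" using Lsc RE by auto
  have b0Ls: "b0 \<in> Ls" using Lsc reflR b0 by auto
  have dualEq: "dual n xb A L = Ls"
    unfolding dual_def
  proof (rule the_equality)
    show "Ls \<in> circuits n xb A \<and> nbrs n xb A L \<subseteq> Ls"
    proof
      show "Ls \<in> circuits n xb A" unfolding circuits_def Ls_def
        using b0 E_def R_def by (auto intro: quotientI)
      show "nbrs n xb A L \<subseteq> Ls"
      proof
        fix eb assume "eb \<in> nbrs n xb A L"
        then obtain e where e: "e \<in> L" "eb \<in> E" "br e eb \<in> A" by (auto simp: nbrs_def E_def)
        have "(e1,e) \<in> R" using e Lc by auto
        hence "(b0, eb) \<in> R" using KR[of e1 e b0 eb] b0 e by (auto simp: br_comm)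
        thus "eb \<in> Ls" using Lsc by auto
      qed
    qed
  next
    fix M assume M: "M \<in> circuits n xb A \<and> nbrs n xb A L \<subseteq> M"
    have "b0 \<in> nbrs n xb A L" using b0 assms(9) by (auto simp: nbrs_def E_def)
    hence b0M: "b0 \<in> M" using M by auto
    obtain c where "c \<in> E" "M = R``{c}"
      using M unfolding circuits_def E_def R_def by (auto elim: quotientE)
    thus "M = Ls" using b0M Lsc symR transR by blast
  qed
  have finL: "finite L" using finE LE finite_subset by blast
  have finLs: "finite Ls" using finE LsE finite_subset by blast
  have cardLs: "card Ls \<le> card L"
  proof (rule card_inj_on_le[OF _ _ finL])
    show "inj_on om Ls"
    proof
      fix x y assume xy: "x \<in> Ls" "y \<in> Ls" "om x = om y"
      have xE: "x \<in> E" and yE: "y \<in> E" using xy LsE by auto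
      have ox: "om x \<in> E" "om x \<noteq> x" "fst (om x) = fst x" using omP[OF xE] by auto
      have oy: "om y \<noteq> y" "fst (om y) = fst y" using omP[OF yE] by auto
      show "x = y"
      proof (rule om_uniq[OF P hi])
        show "om x \<in> Ex n xb" "x \<in> Ex n xb" "y \<in> Ex n xb" using ox xE yE E_def by auto
        show "x \<noteq> om x" using ox by metis
        show "y \<noteq> om x" using oy xy(3) by metis
        show "fst x = fst (om x)" using ox by metis
        show "fst y = fst (om x)" using oy xy(3) by metis
      qed
    qed
    show "om ` Ls \<subseteq> L"
    proof
      fix z assume "z \<in> om ` Ls"
      then obtain y where y: "y \<in> Ls" "z = om y" by auto
      have yE: "y \<in> E" using y LsE by auto
      have "(e1, om y) \<in> R"
        using KR[of b0 y e1 "om y"] y Lsc omP[OF yE] e1E b0 by auto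
      thus "z \<in> om ` Ls \<Longrightarrow> z \<in> L" using y Lc by auto
    qed
  qed
  define PP where "PP = pairs n xb A L"
  have PPc: "PP = {v \<in> A. \<exists>e\<in>L. \<exists>eb\<in>Ls. v = br e eb}"
    unfolding PP_def pairs_def dualEq ..
  have finPP: "finite PP"
  proof -
    have "PP \<subseteq> (\<lambda>(e,eb). br e eb) ` (L \<times> Ls)" unfolding PPc by auto
    thus ?thesis using finL finLs by (meson finite_SigmaI finite_imageI finite_subset)
  qed
  have e12: "e1 \<noteq> e2"
  proof
    assume eq: "e1 = e2"
    obtain S where S: "br e1 e2 = pr n xb (chiF (cut_out n S))"
      using assms(8) by (auto simp: Tset_def)
    have fc: "finite (cut_out n S)" using finite_arcs
      by (rule finite_subset[rotated]) (auto simp: cut_out_def)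
    have "br e1 e2 e1 = 2" using eq by (simp add: br_apply)
    moreover have "pr n xb (chiF (cut_out n S)) e1 \<le> 1"
      using fc by (auto simp: pr_def chiF_apply)
    ultimately show False using S by simp
  qed
  have main: "br e1 e2 \<notin> V.span PP \<longleftrightarrow> e2 \<notin> Ls"
  proof
    assume nin: "br e1 e2 \<notin> V.span PP"
    show "e2 \<notin> Ls"
    proof
      assume e2Ls: "e2 \<in> Ls"
      define Bs where "Bs = (\<lambda>a. chi a + chi b0) ` L \<union> (\<lambda>b. chi b - chi b0) ` (Ls - {b0})"
      have finBs: "finite Bs" unfolding Bs_def using finL finLs by auto
      have cBs: "card Bs \<le> card L + (card Ls - 1)"
      proof -
        have "card Bs \<le> card ((\<lambda>a. chi a + chi b0) ` L) + card ((\<lambda>b. chi b - chi b0) ` (Ls - {b0}))"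
          unfolding Bs_def by (rule card_Un_le)
        also have "\<dots> \<le> card L + card (Ls - {b0})"
          by (intro add_mono card_image_le finL) (use finLs in auto)
        also have "card (Ls - {b0}) = card Ls - 1" using b0Ls finLs by simp
        finally show ?thesis .
      qed
      have gen: "br e eb \<in> V.span Bs" if "e \<in> L" "eb \<in> Ls" for e eb
      proof (cases "eb = b0")
        case True
        have "br e eb \<in> Bs" unfolding Bs_def using that True by (auto simp: br_def)
        thus ?thesis by (rule V.span_base)
      next
        case False
        have m1: "chi e + chi b0 \<in> V.span Bs" unfolding Bs_def using that
          by (intro V.span_base) auto
        have m2: "chi eb - chi b0 \<in> V.span Bs" unfolding Bs_def using that False
          by (intro V.span_base) auto
        have "br e eb = (chi e + chi b0) + (chi eb - chi b0)" by (simp add: br_def algebra_simps)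
        thus ?thesis using V.span_add[OF m1 m2] by simp
      qed
      have sub: "insert (br e1 e2) PP \<subseteq> V.span Bs"
        using gen assms(9) e2Ls unfolding PPc by auto
      have "V.dim (insert (br e1 e2) PP) \<le> card Bs" by (rule V.dim_le_card[OF sub finBs])
      moreover have "V.dim (insert (br e1 e2) PP) = Suc (V.dim PP)"
        by (rule dim_insert_gen[OF finPP nin])
      moreover have "V.dim PP = 2 * card L - 1" using assms(7) PP_def by simp
      moreover have "card L \<ge> 1" using finL assms(9) by (metis One_nat_def Suc_leI card_gt_0_iff empty_iff)
      ultimately show False using cBs cardLs by linarith
    qed
  next
    assume e2n: "e2 \<notin> Ls"
    show "br e1 e2 \<notin> V.span PP"
    proof (cases "e2 \<in> L")
      case False
      have "V.span PP \<subseteq> {x. x e2 = 0}"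
      proof (rule V.span_minimal[OF _ sub_zero])
        show "PP \<subseteq> {x. x e2 = 0}" unfolding PPc using False e2n by (auto simp: br_apply)
      qed
      moreover have "br e1 e2 e2 = 1" using e12 by (simp add: br_apply)
      ultimately show ?thesis by auto
    next
      case True
      have disj: "L \<inter> Ls = {}"
      proof (rule ccontr)
        assume "L \<inter> Ls \<noteq> {}"
        then obtain y where "y \<in> L" "y \<in> Ls" by auto
        hence "(b0, e2) \<in> R" using Lc Lsc True symR transR by blast
        thus False using e2n Lsc by auto
      qed
      have e1n: "e1 \<notin> Ls" using disj assms(9) by auto
      have "V.span PP \<subseteq> {x. sum x L = sum x Ls}"
      proof (rule V.span_minimal[OF _ sub_sum])
        show "PP \<subseteq> {x. sum x L = sum x Ls}"
        proof
          fix v assume "v \<in> PP"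
          then obtain e eb where v: "e \<in> L" "eb \<in> Ls" "v = br e eb" unfolding PPc by auto
          have "eb \<notin> L" "e \<notin> Ls" using v disj by auto
          thus "v \<in> {x. sum x L = sum x Ls}"
            using v finL finLs by (simp add: br_apply sum.distrib)
        qed
      qed
      moreover have "sum (br e1 e2) L \<noteq> sum (br e1 e2) Ls"
        using e12 e1n e2n True assms(9) finL finLs by (simp add: br_apply sum.distrib)
      ultimately show ?thesis by auto
    qed
  qed
  show ?thesis using main unfolding PP_def dualEq .
qed
end
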